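(* Let $d^{AB}_n$ denote the number of signed derangements $\sigma\in B_n$ with $\ell_B(\sigma)$ even. Then: (i) for $n\ge 1$, $d^{AB}_n=n!\sum_{k=0}^{n-1}\frac{2^{n-k-1}(-1)^k}{k!}+(-1)^n$; (ii) for $n\ge 2$, $d^{AB}_n=2n\,d^{AB}_{n-1}+(-1)^n(n+1)$, with $d^{AB}_1=0$; (iii) for $n\ge 3$, $d^{AB}_n=(n-1)\big(2d^{AB}_{n-1}+4d^{AB}_{n-2}+(-1)^{n-1}\big)$, with $d^{AB}_1=0$, $d^{AB}_2=3$.
   Context: $B_n$ is the hyperoctahedral group: its elements are words $\sigma=\sigma_1\cdots\sigma_n$ with $\sigma_i\in\{\pm1,\dots,\pm n\}$ such that $|\sigma_1|\cdots|\sigma_n|$ is a permutation of $[n]$. A (signed) derangement is an element with $\sigma_i\ne i$ for all $i$. $\mathrm{inv}(\sigma)=\#\{(i,j):i<j,\ \sigma_i>\sigma_j\}$ with respect to the usual order of integers, and the length is $\ell_B(\sigma)=\mathrm{inv}(\sigma)-\sum_{i:\sigma_i<0}\sigma_i$. *)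

theory Defs
  imports Complex_Main
begin

text \<open>Elements of B_n as words sigma_1 ... sigma_n, represented as functions
  nat => int that are 0 outside the positions {1..n}, and such that
  |sigma_1| ... |sigma_n| is a permutation of {1..n}.\<close>
definition signed_perms :: "nat \<Rightarrow> (nat \<Rightarrow> int) set" where
  "signed_perms n = {\<sigma>. (\<forall>i. i \<notin> {1..n} \<longrightarrow> \<sigma> i = 0) \<and>
      bij_betw (\<lambda>i. nat \<bar>\<sigma> i\<bar>) {1..n} {1..n}}"

definition signed_derangement :: "nat \<Rightarrow> (nat \<Rightarrow> int) \<Rightarrow> bool" where
  "signed_derangement n \<sigma> \<longleftrightarrow> (\<forall>i\<in>{1..n}. \<sigma> i \<noteq> int i)"

definition inv_B :: "nat \<Rightarrow> (nat \<Rightarrow> int) \<Rightarrow> nat" where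
  "inv_B n \<sigma> = card {(i, j). i \<in> {1..n} \<and> j \<in> {1..n} \<and> i < j \<and> \<sigma> i > \<sigma> j}"

definition length_B :: "nat \<Rightarrow> (nat \<Rightarrow> int) \<Rightarrow> int" where
  "length_B n \<sigma> = int (inv_B n \<sigma>) - (\<Sum>i\<in>{i\<in>{1..n}. \<sigma> i < 0}. \<sigma> i)"

definition dAB :: "nat \<Rightarrow> nat" where
  "dAB n = card {\<sigma> \<in> signed_perms n. signed_derangement n \<sigma> \<and> even (length_B n \<sigma>)}"

end

theory Submission imports Defs "HOL-Combinatorics.Permutations"
begin

definition flip :: "nat \<Rightarrow> (nat \<Rightarrow> int) \<Rightarrow> (nat \<Rightarrow> int)" where
  "flip i \<sigma> = \<sigma>(i := - \<sigma> i)"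

lemma sp_val:
  assumes "\<sigma> \<in> signed_perms n" "i \<in> {1..n}"
  shows "nat \<bar>\<sigma> i\<bar> \<in> {1..n}" "\<sigma> i \<noteq> 0"
proof -
  have b: "bij_betw (\<lambda>i. nat \<bar>\<sigma> i\<bar>) {1..n} {1..n}" using assms(1) by (simp add: signed_perms_def)
  show 1: "nat \<bar>\<sigma> i\<bar> \<in> {1..n}" using bij_betw_apply[OF b assms(2)] by simp
  then show "\<sigma> i \<noteq> 0" by auto
qed

lemma sp_inj:
  assumes "\<sigma> \<in> signed_perms n" "i \<in> {1..n}" "j \<in> {1..n}" "\<bar>\<sigma> i\<bar> = \<bar>\<sigma> j\<bar>"
  shows "i = j"
proof -
  have b: "bij_betw (\<lambda>i. nat \<bar>\<sigma> i\<bar>) {1..n} {1..n}" using assms(1) by (simp add: signed_perms_def)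
  then have inj: "inj_on (\<lambda>i. nat \<bar>\<sigma> i\<bar>) {1..n}" by (rule bij_betw_imp_inj_on)
  have e: "nat \<bar>\<sigma> i\<bar> = nat \<bar>\<sigma> j\<bar>" using assms(4) by simp
  show ?thesis using inj_onD[OF inj e assms(2) assms(3)] .
qed

lemma flip_sp:
  assumes "\<sigma> \<in> signed_perms n" "i \<in> {1..n}"
  shows "flip i \<sigma> \<in> signed_perms n"
proof -
  have "(\<lambda>j. nat \<bar>flip i \<sigma> j\<bar>) = (\<lambda>j. nat \<bar>\<sigma> j\<bar>)" by (auto simp: flip_def)
  then show ?thesis using assms by (auto simp: signed_perms_def flip_def)
qed

lemma card_J:
  assumes "\<sigma> \<in> signed_perms n" "i \<in> {1..n}"
  shows "card {j\<in>{1..n}. nat \<bar>\<sigma> j\<bar> < nat \<bar>\<sigma> i\<bar>} = nat \<bar>\<sigma> i\<bar> - 1"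
proof -
  let ?f = "\<lambda>i. nat \<bar>\<sigma> i\<bar>"
  let ?J = "{j\<in>{1..n}. ?f j < ?f i}"
  have b: "bij_betw ?f {1..n} {1..n}" using assms(1) by (simp add: signed_perms_def)
  have "bij_betw ?f ?J {1..<?f i}"
  proof -
    have sub: "?J \<subseteq> {1..n}" by blast
    have inj: "inj_on ?f ?J" using inj_on_subset[OF bij_betw_imp_inj_on[OF b] sub] .
    have "?f ` ?J = {1..<?f i}"
    proof
      show "?f ` ?J \<subseteq> {1..<?f i}"
      proof
        fix y assume "y \<in> ?f ` ?J"
        then obtain j where j: "j \<in> ?J" "y = ?f j" by blast
        have "?f j \<in> {1..n}" using bij_betw_apply[OF b] j(1) by blast
        then show "y \<in> {1..<?f i}" using j by simp
      qed
      show "{1..<?f i} \<subseteq> ?f ` ?J"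
      proof
        fix y assume y: "y \<in> {1..<?f i}"
        have "?f i \<le> n" using sp_val[OF assms] by auto
        then have "y \<in> ?f ` {1..n}" using y b by (simp add: bij_betw_def)
        then obtain j where "j \<in> {1..n}" "y = ?f j" by auto
        then show "y \<in> ?f ` ?J" using y by auto
      qed
    qed
    then show ?thesis using inj by (simp add: bij_betw_def)
  qed
  then show ?thesis by (simp add: bij_betw_same_card)
qed

lemma inv_flip_parity:
  assumes sp: "\<sigma> \<in> signed_perms n" and i: "i \<in> {1..n}"
  shows "\<exists>c. inv_B n (flip i \<sigma>) + inv_B n \<sigma> = 2 * c + (nat \<bar>\<sigma> i\<bar> - 1)"
proof -
  let ?\<tau> = "flip i \<sigma>"
  define A where "A = {(a, b). a \<in> {1..n} \<and> b \<in> {1..n} \<and> a < b \<and> \<sigma> a > \<sigma> b}"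
  define B where "B = {(a, b). a \<in> {1..n} \<and> b \<in> {1..n} \<and> a < b \<and> ?\<tau> a > ?\<tau> b}"
  define D where "D = {(a, b). a \<in> {1..n} \<and> b \<in> {1..n} \<and> a < b \<and> ((\<sigma> a > \<sigma> b) \<noteq> (?\<tau> a > ?\<tau> b))}"
  define J where "J = {j\<in>{1..n}. nat \<bar>\<sigma> j\<bar> < nat \<bar>\<sigma> i\<bar>}"
  define h where "h = (\<lambda>j::nat. if j < i then (j, i) else (i, j))"
  have finA: "finite A" by (rule finite_subset[of _ "{1..n} \<times> {1..n}"]) (auto simp: A_def)
  have finB: "finite B" by (rule finite_subset[of _ "{1..n} \<times> {1..n}"]) (auto simp: B_def)
  have DAB: "D = (A - B) \<union> (B - A)" by (auto simp: A_def B_def D_def)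
  have key: "((\<sigma> a > \<sigma> b) \<noteq> (?\<tau> a > ?\<tau> b)) \<longleftrightarrow>
      ((a = i \<and> nat \<bar>\<sigma> b\<bar> < nat \<bar>\<sigma> i\<bar>) \<or> (b = i \<and> nat \<bar>\<sigma> a\<bar> < nat \<bar>\<sigma> i\<bar>))"
    if ab: "a \<in> {1..n}" "b \<in> {1..n}" "a < b" for a b
  proof (cases "a = i \<or> b = i")
    case False
    then show ?thesis by (auto simp: flip_def)
  next
    case True
    show ?thesis
    proof (cases "a = i")
      case True
      have "b \<noteq> i" using ab True by auto
      then have ne: "\<bar>\<sigma> b\<bar> \<noteq> \<bar>\<sigma> i\<bar>" using sp_inj[OF sp ab(2) i] by metis
      have "\<sigma> b \<noteq> 0" using sp_val[OF sp ab(2)] by auto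
      then show ?thesis using True ne \<open>b \<noteq> i\<close> by (auto simp: flip_def)
    next
      case False
      then have bi: "b = i" using True by auto
      then have ne: "\<bar>\<sigma> a\<bar> \<noteq> \<bar>\<sigma> i\<bar>" using sp_inj[OF sp ab(1) i] False by metis
      have "\<sigma> a \<noteq> 0" using sp_val[OF sp ab(1)] by auto
      then show ?thesis using False bi ne by (auto simp: flip_def)
    qed
  qed
  have DJ: "D = h ` J"
  proof
    show "D \<subseteq> h ` J"
    proof
      fix p assume "p \<in> D"
      then obtain a b where p: "p = (a, b)" "a \<in> {1..n}" "b \<in> {1..n}" "a < b"
        "(\<sigma> a > \<sigma> b) \<noteq> (?\<tau> a > ?\<tau> b)" by (auto simp: D_def)
      then have "(a = i \<and> nat \<bar>\<sigma> b\<bar> < nat \<bar>\<sigma> i\<bar>) \<or> (b = i \<and> nat \<bar>\<sigma> a\<bar> < nat \<bar>\<sigma> i\<bar>)"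
        using key by blast
      then show "p \<in> h ` J"
      proof
        assume "a = i \<and> nat \<bar>\<sigma> b\<bar> < nat \<bar>\<sigma> i\<bar>"
        then have "b \<in> J" "h b = p" using p by (auto simp: J_def h_def)
        then show ?thesis by (metis imageI)
      next
        assume "b = i \<and> nat \<bar>\<sigma> a\<bar> < nat \<bar>\<sigma> i\<bar>"
        then have "a \<in> J" "h a = p" using p by (auto simp: J_def h_def)
        then show ?thesis by (metis imageI)
      qed
    qed
    show "h ` J \<subseteq> D"
    proof
      fix p assume "p \<in> h ` J"
      then obtain j where j: "j \<in> J" "p = h j" by auto
      have ji: "j \<noteq> i" using j by (auto simp: J_def)
      show "p \<in> D"
      proof (cases "j < i")
        case True
        then show ?thesis using j key[of j i] i by (auto simp: D_def J_def h_def)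
      next
        case False
        then have "i < j" using ji by auto
        then show ?thesis using j key[of i j] i False by (auto simp: D_def J_def h_def)
      qed
    qed
  qed
  have injh: "inj_on h J" by (auto simp: inj_on_def h_def J_def split: if_splits)
  have cD: "card D = nat \<bar>\<sigma> i\<bar> - 1"
    using DJ card_image[OF injh] card_J[OF sp i] by (simp add: J_def)
  have "card A + card B = card (A \<union> B) + card (A \<inter> B)" using card_Un_Int[OF finA finB] .
  moreover have "card (A \<union> B) = card (A \<inter> B) + card D"
  proof -
    have "A \<union> B = (A \<inter> B) \<union> D" "(A \<inter> B) \<inter> D = {}" using DAB by auto
    moreover have "finite D" using DAB finA finB by auto
    ultimately show ?thesis using finA by (simp add: card_Un_disjoint)
  qed
  ultimately have "card B + card A = 2 * card (A \<inter> B) + (nat \<bar>\<sigma> i\<bar> - 1)" using cD by simp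
  then show ?thesis unfolding inv_B_def A_def B_def by blast
qed

lemma flip_length_parity:
  assumes sp: "\<sigma> \<in> signed_perms n" and i: "i \<in> {1..n}"
  shows "even (length_B n (flip i \<sigma>)) \<longleftrightarrow> odd (length_B n \<sigma>)"
proof -
  let ?\<tau> = "flip i \<sigma>"
  define g where "g = (\<lambda>\<rho>::nat\<Rightarrow>int. \<lambda>j. if \<rho> j < 0 then \<rho> j else 0)"
  have S: "(\<Sum>j\<in>{j\<in>{1..n}. \<rho> j < 0}. \<rho> j) = g \<rho> i + (\<Sum>j\<in>{1..n} - {i}. g \<rho> j)" for \<rho>
  proof -
    have "(\<Sum>j\<in>{j\<in>{1..n}. \<rho> j < 0}. \<rho> j) = (\<Sum>j\<in>{1..n}. g \<rho> j)"
      unfolding g_def by (rule sum.inter_filter) simp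
    also have "\<dots> = g \<rho> i + (\<Sum>j\<in>{1..n} - {i}. g \<rho> j)" using i by (simp add: sum.remove)
    finally show ?thesis .
  qed
  have rest: "(\<Sum>j\<in>{1..n} - {i}. g ?\<tau> j) = (\<Sum>j\<in>{1..n} - {i}. g \<sigma> j)"
    by (rule sum.cong) (auto simp: g_def flip_def)
  obtain c where c: "inv_B n ?\<tau> + inv_B n \<sigma> = 2 * c + (nat \<bar>\<sigma> i\<bar> - 1)"
    using inv_flip_parity[OF sp i] by blast
  have ne: "\<sigma> i \<noteq> 0" using sp_val[OF sp i] by auto
  have ci: "int (inv_B n ?\<tau>) + int (inv_B n \<sigma>) = 2 * int c + \<bar>\<sigma> i\<bar> - 1"
    using c ne by linarith
  have gt: "g ?\<tau> i - g \<sigma> i = (if \<sigma> i < 0 then - \<sigma> i else - \<sigma> i)"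
    using ne by (auto simp: g_def flip_def)
  have "length_B n ?\<tau> = length_B n \<sigma> + (2 * int c + \<bar>\<sigma> i\<bar> - 1 - 2 * int (inv_B n \<sigma>)) + \<sigma> i"
    unfolding length_B_def S rest using ci gt ne by (auto simp: g_def flip_def)
  moreover have "2 * int c + \<bar>\<sigma> i\<bar> - 1 - 2 * int (inv_B n \<sigma>) + \<sigma> i
      = 2 * (int c - int (inv_B n \<sigma>) + (if \<sigma> i < 0 then 0 else \<sigma> i) - 1) + 1"
    by auto
  ultimately have "length_B n ?\<tau> = length_B n \<sigma> +
      (2 * (int c - int (inv_B n \<sigma>) + (if \<sigma> i < 0 then 0 else \<sigma> i) - 1) + 1)" by simp
  then show ?thesis by (simp add: even_add)
qed


definition G :: "nat \<Rightarrow> nat set \<Rightarrow> (nat \<Rightarrow> int) set" where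
  "G n S = {\<sigma> \<in> signed_perms n. \<forall>i\<in>{1..n} - S. \<sigma> i = int i}"

lemma card_G:
  assumes S: "S \<subseteq> {1..n}"
  shows "card (G n S) = fact (card S) * 2 ^ card S"
proof -
  define \<psi> where "\<psi> = (\<lambda>(p::nat\<Rightarrow>nat, N::nat set). \<lambda>i. if i \<in> S then (if i \<in> N then - int (p i) else int (p i))
      else if i \<in> {1..n} then int i else (0::int))"
  define P where "P = {p. p permutes S} \<times> Pow S"
  have finS: "finite S" using S finite_subset by blast
  have pS: "p i \<in> S" if "p permutes S" "i \<in> S" for p i
    using that by (simp add: permutes_in_image)
  have inj: "inj_on \<psi> P"
  proof (rule inj_onI)
    fix x y assume x: "x \<in> P" and y: "y \<in> P" and e: "\<psi> x = \<psi> y"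
    obtain p N where xp: "x = (p, N)" by (cases x)
    obtain q M where yq: "y = (q, M)" by (cases y)
    have p: "p permutes S" "N \<subseteq> S" using x xp P_def by auto
    have q: "q permutes S" "M \<subseteq> S" using y yq P_def by auto
    have pq: "p i = q i \<and> (i \<in> N \<longleftrightarrow> i \<in> M)" if "i \<in> S" for i
    proof -
      have e1: "\<psi> (p, N) i = \<psi> (q, M) i" using e xp yq by simp
      have "p i \<ge> 1" "q i \<ge> 1" using pS[OF p(1) that] pS[OF q(1) that] S by auto
      then show ?thesis using e1 that unfolding \<psi>_def by (auto split: if_splits)
    qed
    have "p = q"
    proof
      fix i show "p i = q i"
        using pq p(1) q(1) by (cases "i \<in> S") (auto simp: permutes_not_in)
    qed
    moreover have "N = M" using pq p(2) q(2) by blast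
    ultimately show "x = y" using xp yq by simp
  qed
  have img: "\<psi> ` P = G n S"
  proof
    show "\<psi> ` P \<subseteq> G n S"
    proof
      fix \<sigma> assume "\<sigma> \<in> \<psi> ` P"
      then obtain p N where pN: "p permutes S" "N \<subseteq> S" "\<sigma> = \<psi> (p, N)" by (auto simp: P_def)
      have pn: "p permutes {1..n}" using permutes_subset[OF pN(1) S] .
      have "bij_betw p {1..n} {1..n}" using permutes_imp_bij[OF pn] .
      moreover have eqp: "nat \<bar>\<sigma> i\<bar> = p i" if "i \<in> {1..n}" for i
        using pN(3) pN(1) that by (auto simp: \<psi>_def permutes_not_in)
      have "bij_betw (\<lambda>i. nat \<bar>\<sigma> i\<bar>) {1..n} {1..n} = bij_betw p {1..n} {1..n}"
        by (rule bij_betw_cong) (rule eqp)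
      ultimately have "bij_betw (\<lambda>i. nat \<bar>\<sigma> i\<bar>) {1..n} {1..n}" by simp
      moreover have "\<forall>i. i \<notin> {1..n} \<longrightarrow> \<sigma> i = 0" using pN(3) S by (auto simp: \<psi>_def)
      moreover have "\<forall>i\<in>{1..n} - S. \<sigma> i = int i" using pN(3) by (auto simp: \<psi>_def)
      ultimately show "\<sigma> \<in> G n S" by (simp add: G_def signed_perms_def)
    qed
    show "G n S \<subseteq> \<psi> ` P"
    proof
      fix \<sigma> assume sG: "\<sigma> \<in> G n S"
      then have sp: "\<sigma> \<in> signed_perms n" and off: "\<forall>i\<in>{1..n} - S. \<sigma> i = int i" by (auto simp: G_def)
      define f where "f = (\<lambda>i. nat \<bar>\<sigma> i\<bar>)"
      have b: "bij_betw f {1..n} {1..n}" using sp by (simp add: signed_perms_def f_def)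
      have injf: "inj_on f {1..n}" using b by (rule bij_betw_imp_inj_on)
      have fo: "f i = i" if "i \<in> {1..n} - S" for i using off that by (simp add: f_def)
      have "f ` S = S"
      proof
        show "f ` S \<subseteq> S"
        proof
          fix y assume "y \<in> f ` S"
          then obtain x where x: "x \<in> S" "y = f x" by auto
          have xn: "x \<in> {1..n}" using x S by blast
          have y1: "y \<in> {1..n}" using bij_betw_apply[OF b xn] x(2) by simp
          show "y \<in> S"
          proof (rule ccontr)
            assume "y \<notin> S"
            then have "f y = y" using fo y1 by auto
            then have "f y = f x" using x(2) by simp
            then have "y = x" using inj_onD[OF injf _ y1 xn] by blast
            then show False using x \<open>y \<notin> S\<close> by simp
          qed
        qed
        show "S \<subseteq> f ` S"
        proof
          fix y assume y: "y \<in> S"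
          then have "y \<in> f ` {1..n}" using b S by (auto simp: bij_betw_def)
          then obtain x where x: "x \<in> {1..n}" "y = f x" by auto
          have "x \<in> S" using fo x y by (metis DiffI)
          then show "y \<in> f ` S" using x by auto
        qed
      qed
      moreover have "inj_on f S" using injf S inj_on_subset by blast
      ultimately have bS: "bij_betw f S S" by (simp add: bij_betw_def)
      define p where "p = (\<lambda>i. if i \<in> S then f i else i)"
      have "bij_betw p S S = bij_betw f S S" by (rule bij_betw_cong) (simp add: p_def)
      then have "bij_betw p S S" using bS by simp
      then have pp: "p permutes S" by (rule bij_imp_permutes) (simp add: p_def)
      define N where "N = {i\<in>S. \<sigma> i < 0}"
      have "\<sigma> = \<psi> (p, N)"
      proof
        fix i
        show "\<sigma> i = \<psi> (p, N) i"
        proof (cases "i \<in> S")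
          case True
          then show ?thesis by (auto simp: \<psi>_def p_def N_def f_def)
        next
          case False
          then show ?thesis using off sp by (auto simp: \<psi>_def signed_perms_def)
        qed
      qed
      moreover have "(p, N) \<in> P" using pp by (auto simp: P_def N_def)
      ultimately show "\<sigma> \<in> \<psi> ` P" by blast
    qed
  qed
  have "card P = fact (card S) * 2 ^ card S"
    using card_permutations[OF refl finS] finS by (simp add: P_def card_cartesian_product card_Pow)
  then show ?thesis using card_image[OF inj] img by simp
qed

lemma finite_G: "S \<subseteq> {1..n} \<Longrightarrow> finite (G n S)"
  using card_G[of S n] by (metis card.infinite fact_nonzero mult_eq_0_iff power_not_zero zero_neq_numeral)

definition E :: "nat \<Rightarrow> nat set \<Rightarrow> (nat \<Rightarrow> int) set" where
  "E n S = {\<sigma> \<in> G n S. even (length_B n \<sigma>)}"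

lemma flip_flip: "flip i (flip i \<sigma>) = \<sigma>"
  by (auto simp: flip_def)

lemma card_E_ne:
  assumes S: "S \<subseteq> {1..n}" "S \<noteq> {}"
  shows "2 * card (E n S) = card (G n S)"
proof -
  obtain i where i: "i \<in> S" using S by auto
  have i1: "i \<in> {1..n}" using i S by auto
  define Od where "Od = {\<sigma> \<in> G n S. odd (length_B n \<sigma>)}"
  have fG: "finite (G n S)" using finite_G[OF S(1)] .
  have flipG: "flip i \<sigma> \<in> G n S" if "\<sigma> \<in> G n S" for \<sigma>
    using that flip_sp[OF _ i1] i by (auto simp: G_def flip_def)
  have "bij_betw (flip i) (E n S) Od"
  proof (rule bij_betw_byWitness[where f' = "flip i"])
    show "\<forall>a\<in>E n S. flip i (flip i a) = a" by (simp add: flip_flip)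
    show "\<forall>a'\<in>Od. flip i (flip i a') = a'" by (simp add: flip_flip)
    show "flip i ` E n S \<subseteq> Od"
      using flipG flip_length_parity[OF _ i1] by (auto simp: E_def Od_def G_def)
    show "flip i ` Od \<subseteq> E n S"
      using flipG flip_length_parity[OF _ i1] by (auto simp: E_def Od_def G_def)
  qed
  then have "card (E n S) = card Od" by (rule bij_betw_same_card)
  moreover have "card (G n S) = card (E n S) + card Od"
  proof -
    have "G n S = E n S \<union> Od" "E n S \<inter> Od = {}" by (auto simp: E_def Od_def)
    then show ?thesis using fG by (metis card_Un_disjoint finite_Un)
  qed
  ultimately show ?thesis by simp
qed

lemma card_E_empty: "card (E n {}) = 1"
proof -
  have "length_B n \<sigma> = 0" if "\<sigma> \<in> G n {}" for \<sigma>
  proof -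
    have v: "\<forall>i\<in>{1..n}. \<sigma> i = int i" using that by (auto simp: G_def)
    have e1: "{(i, j). i \<in> {1..n} \<and> j \<in> {1..n} \<and> i < j \<and> \<sigma> i > \<sigma> j} = {}" using v by auto
    have e2: "{i\<in>{1..n}. \<sigma> i < 0} = {}" using v by auto
    have "inv_B n \<sigma> = 0" unfolding inv_B_def e1 by simp
    then show ?thesis unfolding length_B_def e2 by simp
  qed
  then have "E n {} = G n {}" by (auto simp: E_def)
  then show ?thesis using card_G[of "{}" n] by simp
qed

definition cc :: "nat \<Rightarrow> nat" where
  "cc k = (if k = 0 then 1 else 2 ^ (k - 1) * fact k)"

lemma card_E:
  assumes S: "S \<subseteq> {1..n}"
  shows "card (E n S) = cc (card S)"
proof (cases "S = {}")
  case True
  then show ?thesis using card_E_empty by (simp add: cc_def)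
next
  case False
  have fS: "finite S" using S finite_subset by blast
  then have "card S \<noteq> 0" using False by simp
  then have "2 * card (E n S) = 2 * (2 ^ (card S - 1) * fact (card S))"
    using card_E_ne[OF S False] card_G[OF S] by (simp add: power_eq_if)
  then show ?thesis using \<open>card S \<noteq> 0\<close> by (simp add: cc_def)
qed

definition F :: "nat \<Rightarrow> nat set \<Rightarrow> nat" where
  "F n T = card {\<sigma> \<in> signed_perms n. even (length_B n \<sigma>) \<and> {i\<in>{1..n}. \<sigma> i \<noteq> int i} = T}"

lemma E_sum:
  assumes S: "S \<subseteq> {1..n}"
  shows "card (E n S) = (\<Sum>T\<in>Pow S. F n T)"
proof -
  define X where "X = (\<lambda>T. {\<sigma> \<in> signed_perms n. even (length_B n \<sigma>) \<and> {i\<in>{1..n}. \<sigma> i \<noteq> int i} = T})"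
  have fS: "finite S" using S finite_subset by blast
  have E: "E n S = (\<Union>T\<in>Pow S. X T)"
  proof (rule set_eqI)
    fix \<sigma>
    have q: "(\<forall>i\<in>{1..n}-S. \<sigma> i = int i) \<longleftrightarrow> {i\<in>{1..n}. \<sigma> i \<noteq> int i} \<subseteq> S" by blast
    have "\<sigma> \<in> E n S \<longleftrightarrow> \<sigma> \<in> signed_perms n \<and> even (length_B n \<sigma>) \<and> {i\<in>{1..n}. \<sigma> i \<noteq> int i} \<subseteq> S"
      unfolding E_def G_def q by blast
    also have "\<dots> \<longleftrightarrow> (\<exists>T\<in>Pow S. \<sigma> \<in> X T)" unfolding X_def by blast
    finally show "\<sigma> \<in> E n S \<longleftrightarrow> \<sigma> \<in> (\<Union>T\<in>Pow S. X T)" by blast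
  qed
  have fin: "finite (X T)" if "T \<in> Pow S" for T
  proof -
    have "X T \<subseteq> G n S" using that by (auto simp: X_def G_def)
    then show ?thesis using finite_G[OF S] finite_subset by blast
  qed
  have "card (E n S) = (\<Sum>T\<in>Pow S. card (X T))"
  proof -
    have d: "\<forall>T\<in>Pow S. \<forall>T'\<in>Pow S. T \<noteq> T' \<longrightarrow> X T \<inter> X T' = {}"
      unfolding X_def by blast
    have f1: "finite (Pow S)" using fS by simp
    have f2: "\<forall>T\<in>Pow S. finite (X T)" using fin by blast
    show ?thesis unfolding E using card_UN_disjoint[OF f1 f2 d] .
  qed
  then show ?thesis by (simp add: F_def X_def)
qed

lemma dAB_F: "dAB n = F n {1..n}"
proof -
  have "{\<sigma> \<in> signed_perms n. signed_derangement n \<sigma> \<and> even (length_B n \<sigma>)}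
      = {\<sigma> \<in> signed_perms n. even (length_B n \<sigma>) \<and> {i\<in>{1..n}. \<sigma> i \<noteq> int i} = {1..n}}"
    by (auto simp: signed_derangement_def)
  then show ?thesis by (simp add: dAB_def F_def)
qed

lemma dAB_sum: "int (dAB n) = (\<Sum>k=0..n. int (n choose k) * (-1) ^ (n - k) * int (cc k))"
proof -
  let ?f = "\<lambda>T. int (F n T)"
  have "?f {1..n} = (\<Sum>T\<in>Pow {1..n}. (-1) ^ (card {1..n} - card T) * sum ?f (Pow T))"
    by (rule inclusion_exclusion_mobius) auto
  also have "\<dots> = (\<Sum>T\<in>Pow {1..n}. (-1) ^ (n - card T) * int (cc (card T)))"
  proof (rule sum.cong)
    fix T assume "T \<in> Pow {1..n}"
    then have "T \<subseteq> {1..n}" by auto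
    then have "sum ?f (Pow T) = int (cc (card T))" using E_sum card_E
      by (metis of_nat_sum)
    then show "(-1) ^ (card {1..n} - card T) * sum ?f (Pow T) = (-1) ^ (n - card T) * int (cc (card T))"
      by simp
  qed simp
  also have "\<dots> = (\<Sum>k=0..n. \<Sum>T\<in>{T \<in> Pow {1..n}. card T = k}. (-1) ^ (n - card T) * int (cc (card T)))"
    by (rule sum.group[symmetric]) (auto simp: card_mono[of "{1..n}", simplified])
  also have "\<dots> = (\<Sum>k=0..n. int (n choose k) * (-1) ^ (n - k) * int (cc k))"
  proof (rule sum.cong)
    fix k
    have "card {T \<in> Pow {1..n}. card T = k} = n choose k"
      using n_subsets[of "{1..n}" k] by simp
    then show "(\<Sum>T\<in>{T \<in> Pow {1..n}. card T = k}. (-1) ^ (n - card T) * int (cc (card T)))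
        = int (n choose k) * (-1) ^ (n - k) * int (cc k)"
      by simp
  qed simp
  finally show ?thesis by (simp add: dAB_F)
qed


lemma aux: "(g::real) \<noteq> 0 \<Longrightarrow> x * f * g * (a * b / g) = x * b * (a * f)"
  by (simp add: field_simps)

lemma dAB_real:
  assumes n: "n \<ge> 1"
  shows "real (dAB n) = fact n * (\<Sum>k=0..n-1. 2 ^ (n - k - 1) * (-1) ^ k / fact k) + (-1) ^ n"
proof -
  have "real (dAB n) = real_of_int (int (dAB n))" by simp
  also have "\<dots> = (\<Sum>k=0..n. real (n choose k) * (-1) ^ (n - k) * real (cc k))"
    unfolding dAB_sum by simp
  also have "\<dots> = (-1) ^ n + (\<Sum>k=1..n. real (n choose k) * (-1) ^ (n - k) * real (cc k))"
    by (subst sum.atLeast_Suc_atMost) (auto simp: cc_def)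
  also have "(\<Sum>k=1..n. real (n choose k) * (-1) ^ (n - k) * real (cc k))
      = (\<Sum>j=0..n-1. fact n * (2 ^ (n - j - 1) * (-1) ^ j / fact j))"
  proof (rule sum.reindex_bij_witness[where j = "\<lambda>k. n - k" and i = "\<lambda>j. n - j"])
    fix k assume k: "k \<in> {1..n}"
    then have kn: "k \<le> n" "k \<ge> 1" by auto
    have h: "fact k * fact (n - k) * (n choose k) = (fact n :: nat)" by (rule binomial_fact_lemma[OF kn(1)])
    have "real (fact k * fact (n - k) * (n choose k)) = real (fact n :: nat)" by (simp only: h)
    then have bf: "real (n choose k) * fact k * fact (n - k) = fact n"
      by (simp only: of_nat_mult of_nat_fact mult_ac)
    have nk: "n - (n - k) = k" using kn by simp
    have "fact n * (2 ^ (n - (n - k) - 1) * (-1) ^ (n - k) / fact (n - k))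
        = real (n choose k) * fact k * fact (n - k) * (2 ^ (k - 1) * (-1) ^ (n - k) / fact (n - k))"
      by (simp only: bf nk)
    also have "\<dots> = real (n choose k) * (-1) ^ (n - k) * (2 ^ (k - 1) * fact k)"
      by (rule aux) simp
    also have "\<dots> = real (n choose k) * (-1) ^ (n - k) * real (cc k)"
      using kn by (simp add: cc_def)
    finally show "fact n * (2 ^ (n - (n - k) - 1) * (-1) ^ (n - k) / fact (n - k))
        = real (n choose k) * (-1) ^ (n - k) * real (cc k)" .
  qed (use n in auto)
  finally show ?thesis by (simp add: sum_distrib_left)
qed

definition R :: "nat \<Rightarrow> real" where
  "R n = (\<Sum>k=0..n-1. 2 ^ (n - k - 1) * (-1) ^ k / fact k)"

lemma R_step: "R (Suc (Suc p)) = 2 * R (Suc p) + (-1) ^ Suc p / fact (Suc p)"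
proof -
  have "R (Suc (Suc p)) = (\<Sum>k=0..Suc p. 2 ^ (Suc p - k) * (-1) ^ k / fact k)"
    by (simp add: R_def)
  also have "\<dots> = (\<Sum>k=0..p. 2 ^ (Suc p - k) * (-1) ^ k / fact k) + (-1) ^ Suc p / fact (Suc p)"
    by simp
  also have "(\<Sum>k=0..p. 2 ^ (Suc p - k) * (-1) ^ k / fact k) = 2 * R (Suc p)"
    unfolding R_def sum_distrib_left
    by (rule sum.cong) (auto simp: Suc_diff_le)
  finally show ?thesis .
qed

lemma alg2:
  fixes f D1 D2 F2 x s q :: real
  assumes "f \<noteq> 0" "D2 = F2 * (2 * x + (- s) / f) + s" "F2 = (q + 2) * f" "D1 = f * x + (- s)"
  shows "D2 = 2 * (q + 2) * D1 + s * (q + 3)"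
proof -
  have "D2 = (q + 2) * f * (2 * x) + (q + 2) * (f * ((- s) / f)) + s"
    using assms(2,3) by (simp only: distrib_left mult.assoc)
  also have "f * ((- s) / f) = - s" using assms(1) by simp
  finally have h: "D2 = (q + 2) * f * (2 * x) + (q + 2) * (- s) + s" .
  show ?thesis unfolding h assms(4) by (simp add: algebra_simps)
qed

lemma dAB_rec_real:
  assumes "n \<ge> 2"
  shows "real (dAB n) = 2 * real n * real (dAB (n - 1)) + (-1) ^ n * (real n + 1)"
proof -
  obtain p where p: "n = Suc (Suc p)" using assms by (metis add_2_eq_Suc le_Suc_ex)
  have d2: "real (dAB (Suc (Suc p))) = fact (Suc (Suc p)) * R (Suc (Suc p)) + (-1) ^ Suc (Suc p)"
    using dAB_real[of "Suc (Suc p)"] by (simp add: R_def)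
  have d1: "real (dAB (Suc p)) = fact (Suc p) * R (Suc p) + (-1) ^ Suc p"
    using dAB_real[of "Suc p"] by (simp add: R_def)
  have d2': "real (dAB (Suc (Suc p))) = fact (Suc (Suc p)) * (2 * R (Suc p) + (- ((-1) ^ p)) / fact (Suc p)) + (-1) ^ p"
    using d2 R_step[of p] by simp
  have ff: "fact (Suc (Suc p)) = (real p + 2) * fact (Suc p)" by (simp add: algebra_simps)
  have d1': "real (dAB (Suc p)) = fact (Suc p) * R (Suc p) + (- ((-1) ^ p))" using d1 by simp
  have "real (dAB (Suc (Suc p))) = 2 * (real p + 2) * real (dAB (Suc p)) + (-1) ^ p * (real p + 3)"
    by (rule alg2[OF _ d2' ff d1']) simp
  then show ?thesis unfolding p by (simp add: algebra_simps)
qed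

lemma dAB_rec:
  assumes "n \<ge> 2"
  shows "int (dAB n) = 2 * int n * int (dAB (n - 1)) + (-1) ^ n * (int n + 1)"
proof -
  have "real_of_int (int (dAB n)) = real_of_int (2 * int n * int (dAB (n - 1)) + (-1) ^ n * (int n + 1))"
    using dAB_rec_real[OF assms] by simp
  then show ?thesis by (rule of_int_eq_iff[THEN iffD1])
qed

lemma dAB1: "dAB 1 = 0"
  using dAB_real[of 1] by simp

lemma dAB2: "dAB 2 = 3"
proof -
  have "real (dAB 2) = 3" using dAB_real[of 2] by (simp add: numeral_2_eq_2)
  then show ?thesis by simp
qed

lemma dAB_rec3:
  assumes "n \<ge> 3"
  shows "int (dAB n) = (int n - 1) * (2 * int (dAB (n - 1)) + 4 * int (dAB (n - 2)) + (-1) ^ (n - 1))"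
proof -
  define p where "p = n - 3"
  have p: "n = Suc (Suc (Suc p))" using assms by (simp add: p_def)
  define a where "a = int (dAB (Suc p))"
  define b where "b = int (dAB (Suc (Suc p)))"
  define c where "c = int (dAB (Suc (Suc (Suc p))))"
  define s where "s = ((-1) ^ p :: int)"
  have h1: "c = 2 * (int p + 3) * b - s * (int p + 4)"
    using dAB_rec[of "Suc (Suc (Suc p))"] by (simp add: a_def b_def c_def s_def algebra_simps)
  have h2: "b = 2 * (int p + 2) * a + s * (int p + 3)"
    using dAB_rec[of "Suc (Suc p)"] by (simp add: a_def b_def c_def s_def algebra_simps)
  have "c = (int p + 2) * (2 * b + 4 * a + s)"
    using h1 h2 by (simp add: algebra_simps)
  then show ?thesis unfolding p by (simp add: a_def b_def c_def s_def algebra_simps)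
qed

theorem theorem1p2:
  shows "(\<forall>n\<ge>1. real (dAB n) =
            fact n * (\<Sum>k=0..n-1. 2 ^ (n - k - 1) * (-1) ^ k / fact k) + (-1) ^ n)
       \<and> (\<forall>n\<ge>2. int (dAB n) = 2 * int n * int (dAB (n - 1)) + (-1) ^ n * (int n + 1))
       \<and> dAB 1 = 0
       \<and> (\<forall>n\<ge>3. int (dAB n) = (int n - 1) *
            (2 * int (dAB (n - 1)) + 4 * int (dAB (n - 2)) + (-1) ^ (n - 1)))
       \<and> dAB 2 = 3"
  using dAB_real dAB_rec dAB1 dAB_rec3 dAB2 by blast

end
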